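(* Let $X\subseteq\Omega$ be club in $\Omega$ with $0\notin X$, $\Theta=\Theta_X$. Let $\alpha=\Omega\tilde\alpha>0$ (a nonzero multiple of $\Omega$) and $\beta<\Omega$ be such that $\alpha+\beta\in\hat\varepsilon_{\Omega+1}\cap\mathrm{JUMP}(X)$, and assume $\tau(\alpha)=\Omega$. Define $\theta_0=\Theta^*(\alpha+\beta)$ and $\theta_{n+1}=\Theta(\alpha[\theta_n])$. Then $(\theta_n)_{n<\omega}$ is strictly increasing with supremum $\Theta(\alpha+\beta)$.
   Context: $\Omega$ is the first uncountable ordinal; $\varepsilon_{\Omega+1}$ the least $\varepsilon>\Omega$ with $\omega^\varepsilon=\varepsilon$. Every $0<\xi<\varepsilon_{\Omega+1}$ has a unique $\Omega$-normal form $\xi=\Omega^{\alpha}\beta+\gamma$ with $0<\beta<\Omega$, $\gamma<\Omega^{\alpha}$. $C(0)=\{0\}$, $C(\Omega^\alpha\beta+\gamma)=C(\alpha)\cup C(\gamma)\cup\{\beta\}$; $\xi^*=\max C(\xi)$. For $\theta<\Omega$: $0[\theta]=1[\theta]=0$; $(\Omega^\alpha\beta+\gamma)[\theta]=\Omega^\alpha\beta+\gamma[\theta]$ if $\gamma>0$; $(\Omega^\alpha\beta)[\theta]=\Omega^\alpha\theta$ if $\beta$ is a limit; $\Omega^{\alpha+1}[\theta]=\Omega^\alpha\theta$; $(\Omega^\alpha(\beta+1))[\theta]=\Omega^\alpha\beta+(\Omega^\alpha)[\theta]$ if $\beta>0$; $\Omega^\alpha[\theta]=\Omega^{\alpha[\theta]}$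 if $\alpha$ is a limit. $\tau(0)=0$, $\tau(\zeta+1)=1$, $\tau(\Omega^\alpha\beta+\gamma)=\tau(\gamma)$ if $\gamma>0$, $\tau(\Omega^\alpha\beta)=\beta$ if $\beta$ limit, $\tau(\Omega^\alpha(\beta+1))=\tau(\alpha)$ if $\alpha$ limit, $\tau(\Omega^{\alpha+1}(\beta+1))=\Omega$. $\Theta_X(\xi)$ is the least $\theta\in X$ with $\theta>\xi^*$ such that all $\zeta<\xi$ with $\zeta^*<\theta$ have $\Theta_X(\zeta)<\theta$. $\Omega_0=1$, $\Omega_{n+1}=\Omega^{\Omega_n}$, $\Theta_X(\varepsilon_{\Omega+1})=\sup_n\Theta_X(\Omega_n)$, $\hat\varepsilon_{\Omega+1}=\{\xi<\varepsilon_{\Omega+1}:\xi^*<\Theta_X(\varepsilon_{\Omega+1})\}$. $\mathrm{FIX}(X)$ is the set of $\xi$ with $(\xi[1])^*<\xi^*=\tau(\xi)=\Theta_X(\gamma)$ for some $\gamma>\xi$; $\mathrm{JUMP}(X)=\{0\}\cup\{\text{successors}\}\cup\mathrm{FIX}(X)$; $\Theta^*(\xi)=\Theta_X(\zeta)$ if $\xi=\zeta+1$, $\tau(\xi)$ if $\xi\in\mathrm{FIX}(X)$, and $0$ otherwise. *)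

theory Defs
  imports Main "HOL-Library.Countable_Set"
begin

text \<open>Countable ordinals are modelled by a type variable 'a of class wellorder,
  assumed (in the theorem) to be uncountable with all proper initial segments
  countable, i.e. of order type omega_1 = Omega.\<close>

definition omega1_type :: "'a::wellorder itself \<Rightarrow> bool" where
  "omega1_type _ \<longleftrightarrow> uncountable (UNIV :: 'a set) \<and> (\<forall>x::'a. countable {y. y < x})"

definition ozero :: "'a::wellorder" where "ozero = (LEAST x. True)"
definition osuc :: "'a::wellorder \<Rightarrow> 'a" where "osuc b = (LEAST x. b < x)"
definition oone :: "'a::wellorder" where "oone = osuc ozero"
definition osuccessor :: "'a::wellorder \<Rightarrow> bool" where "osuccessor b \<longleftrightarrow> (\<exists>b'. b = osuc b')"
definition opred :: "'a::wellorder \<Rightarrow> 'a" where "opred b = (THE b'. b = osuc b')"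
definition olimit :: "'a::wellorder \<Rightarrow> bool" where
  "olimit b \<longleftrightarrow> b \<noteq> ozero \<and> \<not> osuccessor b"

definition club :: "'a::wellorder set \<Rightarrow> bool" where
  "club X \<longleftrightarrow> (\<forall>x. \<exists>y\<in>X. x < y) \<and>
     (\<forall>l. olimit l \<and> (\<forall>y<l. \<exists>x\<in>X. y < x \<and> x < l) \<longrightarrow> l \<in> X)"

section \<open>Ordinals below epsilon_{Omega+1} via Omega-normal forms\<close>

text \<open>\<open>P a b c\<close> stands for Omega^a * b + c.\<close>
datatype 'a ont = Z | P "'a ont" 'a "'a ont"

fun nlt :: "'a::wellorder ont \<Rightarrow> 'a ont \<Rightarrow> bool" where
  "nlt Z Z = False"
| "nlt Z (P _ _ _) = True"
| "nlt (P _ _ _) Z = False"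
| "nlt (P a b c) (P a' b' c') =
     (nlt a a' \<or> (a = a' \<and> (b < b' \<or> (b = b' \<and> nlt c c'))))"

text \<open>Well-formed Omega-normal forms: 0 < b < Omega and c < Omega^a.\<close>
fun nf :: "'a::wellorder ont \<Rightarrow> bool" where
  "nf Z = True"
| "nf (P a b c) = (nf a \<and> b \<noteq> ozero \<and> nf c \<and>
     (case c of Z \<Rightarrow> True | P a' _ _ \<Rightarrow> nlt a' a))"

definition mk :: "'a ont \<Rightarrow> 'a::wellorder \<Rightarrow> 'a ont \<Rightarrow> 'a ont" where
  "mk a b c = (if b = ozero then c else P a b c)"

definition none :: "'a::wellorder ont" where "none = P Z oone Z"

fun nsuc :: "'a::wellorder ont \<Rightarrow> 'a ont" where
  "nsuc Z = P Z oone Z"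
| "nsuc (P a b c) = (if a = Z then P Z (osuc b) Z else P a b (nsuc c))"

definition nsuccessor :: "'a::wellorder ont \<Rightarrow> bool" where
  "nsuccessor x \<longleftrightarrow> (\<exists>z. nf z \<and> x = nsuc z)"
definition npred :: "'a::wellorder ont \<Rightarrow> 'a ont" where
  "npred x = (THE z. nf z \<and> x = nsuc z)"

fun C :: "'a::wellorder ont \<Rightarrow> 'a set" where
  "C Z = {ozero}"
| "C (P a b c) = C a \<union> C c \<union> {b}"

definition star :: "'a::wellorder ont \<Rightarrow> 'a" where "star x = Max (C x)"

text \<open>Fundamental sequences xi[theta]. The helper computes (Omega^a)[theta],
  given r = a[theta].\<close>
definition fspow :: "'a::wellorder ont \<Rightarrow> 'a \<Rightarrow> 'a ont \<Rightarrow> 'a ont" where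
  "fspow a t r = (if a = Z then Z
                   else if nsuccessor a then mk (npred a) t Z
                   else P r oone Z)"

fun fs :: "'a::wellorder ont \<Rightarrow> 'a \<Rightarrow> 'a ont" where
  "fs Z t = Z"
| "fs (P a b c) t =
     (if c \<noteq> Z then P a b (fs c t)
      else if olimit b then mk a t Z
      else if b = oone then fspow a t (fs a t)
      else P a (opred b) (fspow a t (fs a t)))"

text \<open>tau takes values in Omega + 1: countable values or Omega itself.\<close>
datatype 'a tv = TC 'a | TOmega

fun tau :: "'a::wellorder ont \<Rightarrow> 'a tv" where
  "tau Z = TC ozero"
| "tau (P a b c) =
     (if c \<noteq> Z then tau c
      else if olimit b then TC b
      else if a = Z then TC oone
      else if nsuccessor a then TOmega
      else tau a)"

fun tval :: "'a tv \<Rightarrow> 'a" where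
  "tval (TC v) = v"
| "tval TOmega = undefined"

definition Theta :: "'a::wellorder set \<Rightarrow> 'a ont \<Rightarrow> 'a" where
  "Theta X = wfrec {(z, x). nf z \<and> nf x \<and> nlt z x}
     (\<lambda>f x. LEAST t. t \<in> X \<and> star x < t \<and>
        (\<forall>z. nf z \<and> nlt z x \<and> star z < t \<longrightarrow> f z < t))"

fun OmegaN :: "nat \<Rightarrow> 'a::wellorder ont" where
  "OmegaN 0 = none"
| "OmegaN (Suc n) = P (OmegaN n) oone Z"

text \<open>Theta_X(epsilon_{Omega+1}) = sup_n Theta_X(Omega_n) (least upper bound).\<close>
definition ThetaEps :: "'a::wellorder set \<Rightarrow> 'a" where
  "ThetaEps X = (LEAST s. \<forall>n. Theta X (OmegaN n) \<le> s)"

definition epshat :: "'a::wellorder set \<Rightarrow> 'a ont set" where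
  "epshat X = {x. nf x \<and> star x < ThetaEps X}"

definition FIX :: "'a::wellorder set \<Rightarrow> 'a ont set" where
  "FIX X = {x. nf x \<and> star (fs x oone) < star x \<and> tau x = TC (star x) \<and>
               (\<exists>g. nf g \<and> nlt x g \<and> Theta X g = star x)}"

definition JUMP :: "'a::wellorder set \<Rightarrow> 'a ont set" where
  "JUMP X = {Z} \<union> {x. nsuccessor x} \<union> FIX X"

definition ThetaStar :: "'a::wellorder set \<Rightarrow> 'a ont \<Rightarrow> 'a" where
  "ThetaStar X x = (if nsuccessor x then Theta X (npred x)
                    else if x \<in> FIX X then tval (tau x) else ozero)"

text \<open>alpha is a multiple Omega*alpha' of Omega iff its normal form has no
  term with exponent 0.\<close>
fun omega_mult :: "'a::wellorder ont \<Rightarrow> bool" where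
  "omega_mult Z = True"
| "omega_mult (P a b c) = (a \<noteq> Z \<and> omega_mult c)"

text \<open>alpha + beta for alpha a multiple of Omega and beta < Omega.\<close>
fun addc :: "'a::wellorder ont \<Rightarrow> 'a \<Rightarrow> 'a ont" where
  "addc Z b = mk Z b Z"
| "addc (P a b' c) b = P a b' (addc c b)"

end

theory Submission
  imports Defs
begin


lemma nlt_Z[simp]: "\<not> nlt x Z"
  by (cases x) auto

lemma Z_nlt[simp]: "nlt Z x \<longleftrightarrow> x \<noteq> Z"
  by (cases x) auto

lemma nlt_irrefl[simp]: "\<not> nlt x x"
  by (induction x) auto

lemma nlt_trans: "nlt x y \<Longrightarrow> nlt y z \<Longrightarrow> nlt x z"
proof (induction x arbitrary: y z)
  case Z
  then show ?case by (cases z) auto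
next
  case (P a b c)
  note IH = P.IH
  from P.prems obtain a1 b1 c1 where y: "y = P a1 b1 c1" by (cases y) auto
  from P.prems y obtain a2 b2 c2 where z: "z = P a2 b2 c2" by (cases z) auto
  show ?case using P.prems IH(1)[of a1 a2] IH(2)[of c1 c2] unfolding y z
    by (auto dest: less_trans)
qed

lemma nlt_asym: "nlt x y \<Longrightarrow> \<not> nlt y x"
  using nlt_trans nlt_irrefl by blast

lemma nlt_tri: "nlt x y \<or> x = y \<or> nlt y x"
proof (induction x arbitrary: y)
  case Z
  then show ?case by (cases y) auto
next
  case (P a b c)
  note IH = P.IH
  show ?case
  proof (cases y)
    case (P a' b' c')
    then show ?thesis using IH(1)[of a'] IH(2)[of c'] less_linear[of b b'] by auto
  qed auto
qed

lemma nf_PZ: "nf (P Z b c) \<longleftrightarrow> b \<noteq> ozero \<and> c = Z"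
  by (cases c) auto

definition below :: "'a::wellorder ont \<Rightarrow> 'a ont \<Rightarrow> bool" where
  "below a y = (case y of Z \<Rightarrow> True | P a' _ _ \<Rightarrow> nlt a' a)"

lemma nf_P: "nf (P a b c) \<longleftrightarrow> nf a \<and> b \<noteq> ozero \<and> nf c \<and> below a c"
  by (simp add: below_def)

declare nf.simps(2)[simp del]
declare nf_P[simp]

lemma below_Z[simp]: "below a Z" by (simp add: below_def)
lemma below_P[simp]: "below a (P a' b c) = nlt a' a" by (simp add: below_def)

lemma below_Z_iff[simp]: "below Z c \<longleftrightarrow> c = Z"
  by (cases c) auto

lemma below_mono: "nlt y c \<Longrightarrow> below a c \<Longrightarrow> below a y"
  by (cases y; cases c) (auto simp: below_def intro: nlt_trans)

section \<open>well-foundedness\<close>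

abbreviation RR :: "('a::wellorder ont \<times> 'a ont) set" where
  "RR \<equiv> {(z, x). nf z \<and> nf x \<and> nlt z x}"

lemma inner_acc:
  assumes Q: "\<And>y. nf y \<Longrightarrow> below a y \<Longrightarrow> y \<in> Wellfounded.acc RR"
  shows "nf c \<Longrightarrow> below a c \<Longrightarrow> P a b c \<in> Wellfounded.acc RR"
proof (induction b arbitrary: c rule: less_induct)
  case (less b)
  have cacc: "c \<in> Wellfounded.acc RR" using Q less.prems by blast
  from cacc less.prems show ?case
  proof (induction c rule: acc.induct)
    case (accI c)
    show ?case
    proof (rule acc.accI)
      fix y assume "(y, P a b c) \<in> RR"
      then have y: "nf y" "nlt y (P a b c)" by auto
      show "y \<in> Wellfounded.acc RR"
      proof (cases y)
        case Z
        then show ?thesis using Q by auto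
      next
        case (P a' b' c')
        from y P have "nlt a' a \<or> (a' = a \<and> (b' < b \<or> (b' = b \<and> nlt c' c)))" by auto
        moreover have "nf c'" "below a' c'" "nf a'" "b' \<noteq> ozero" using y P by (auto simp: nf_P)
        ultimately show ?thesis
          using Q[of y] P less.IH[of b' c'] accI by auto
      qed
    qed
  qed
qed

lemma Q_acc: "a \<in> Wellfounded.acc RR \<Longrightarrow> nf a \<Longrightarrow> nf y \<Longrightarrow> below a y \<Longrightarrow> y \<in> Wellfounded.acc RR"
proof (induction a arbitrary: y rule: acc.induct)
  case (accI a)
  show ?case
  proof (cases y)
    case Z
    show ?thesis unfolding Z by (rule acc.accI) auto
  next
    case (P a' b' c')
    have "nlt a' a" using accI P by auto
    have "nf a'" "nf c'" "below a' c'" using accI P by (auto simp: nf_P)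
    have IH: "\<And>y. nf y \<Longrightarrow> below a' y \<Longrightarrow> y \<in> Wellfounded.acc RR"
      using accI(2)[of a'] \<open>nlt a' a\<close> \<open>nf a'\<close> accI.prems by blast
    show ?thesis using inner_acc[OF IH \<open>nf c'\<close> \<open>below a' c'\<close>] P by simp
  qed
qed

lemma all_acc: "x \<in> Wellfounded.acc RR"
proof (cases "nf x")
  case True
  then show ?thesis
  proof (induction x)
    case Z
    show ?case by (rule acc.accI) simp
  next
    case (P a b c)
    then have "nf a" "nf c" "below a c" by (auto simp only: nf_P)
    have aa: "a \<in> Wellfounded.acc RR" using P.IH(1) \<open>nf a\<close> .
    have Q: "\<And>y. nf y \<Longrightarrow> below a y \<Longrightarrow> y \<in> Wellfounded.acc RR"
      using Q_acc[OF aa \<open>nf a\<close>] .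
    show ?case using inner_acc[OF Q \<open>nf c\<close> \<open>below a c\<close>] .
  qed
next
  case False
  show ?thesis
  proof (rule acc.accI)
    fix y assume "(y, x) \<in> RR"
    then show "y \<in> Wellfounded.acc RR" using False by simp
  qed
qed

lemma wfRR: "wf RR"
  using all_acc wf_iff_acc by blast


lemma bounded:
  assumes "omega1_type TYPE('a::wellorder)" "countable (S::'a set)"
  shows "\<exists>u. \<forall>y\<in>S. y < u"
proof (rule ccontr)
  assume "\<not> ?thesis"
  then have "\<forall>u. \<exists>y\<in>S. u \<le> y" by (meson not_le)
  then have "(UNIV::'a set) \<subseteq> (\<Union>y\<in>S. insert y {v. v < y})"
    by (auto simp: le_less)
  moreover have "countable (\<Union>y\<in>S. insert y {v. v < y})"
    using assms unfolding omega1_type_def by auto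
  ultimately have "countable (UNIV::'a set)" using countable_subset by blast
  then show False using assms(1) unfolding omega1_type_def by auto
qed

lemma ozero_le[simp]: "ozero \<le> (x::'a::wellorder)"
  unfolding ozero_def by (rule Least_le) simp

lemma le_ozero_iff[simp]: "(x::'a::wellorder) \<le> ozero \<longleftrightarrow> x = ozero"
  using ozero_le[of x] by (auto intro: antisym)

lemma not_lt_ozero[simp]: "\<not> (x::'a::wellorder) < ozero"
  using ozero_le[of x] by (simp add: not_less)

context
  fixes dummy :: "'a::wellorder itself"
  assumes om: "omega1_type TYPE('a)"
begin

lemma no_max: "\<exists>y. (x::'a) < y"
  using bounded[OF om, of "{x}"] by auto

lemma osuc_gt: "(x::'a) < osuc x"
  unfolding osuc_def using no_max[of x] by (rule LeastI_ex)

lemma osuc_least: "(x::'a) < y \<Longrightarrow> osuc x \<le> y"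
  unfolding osuc_def by (rule Least_le)

lemma lt_osuc: "(y::'a) < osuc x \<Longrightarrow> y \<le> x"
proof (rule ccontr)
  assume a: "y < osuc x" "\<not> y \<le> x"
  then have "x < y" by simp
  then have "osuc x \<le> y" by (rule osuc_least)
  with a show False by simp
qed

lemma osuc_inj: "osuc (x::'a) = osuc y \<Longrightarrow> x = y"
proof (rule ccontr)
  assume a: "osuc x = osuc y" "x \<noteq> y"
  show False
  proof (cases "x < y")
    case True
    then have "osuc x \<le> y" by (rule osuc_least)
    then show False using osuc_gt[of y] a by simp
  next
    case False
    then have "y < x" using a by simp
    then have "osuc y \<le> x" by (rule osuc_least)
    then show False using osuc_gt[of x] a by simp
  qed
qed

lemma oone_ne[simp]: "oone \<noteq> (ozero::'a)"
  unfolding oone_def using osuc_gt[of ozero] by auto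

lemma opred_osuc: "opred (osuc (x::'a)) = x"
  unfolding opred_def
proof (rule the_equality)
  fix b' assume "osuc x = osuc (b'::'a)"
  then show "b' = x" using osuc_inj by simp
qed simp

end


lemma ozero_in_C: "ozero \<in> C x"
  by (induction x) auto

lemma finite_C[simp]: "finite (C x)"
  by (induction x) auto

lemma star_Z[simp]: "star Z = ozero"
  by (simp add: star_def)

lemma star_P[simp]: "star (P a b c) = max (star a) (max (star c) b)"
proof -
  have "C (P a b c) = C a \<union> (C c \<union> {b})" by auto
  moreover have "C a \<noteq> {}" "C c \<noteq> {}" using ozero_in_C by blast+
  ultimately show ?thesis unfolding star_def
    by (simp only: Max_Un finite_C finite_Un finite.intros Un_empty Max_singleton simp_thms
      insert_not_empty)
qed

lemma C_le_star: "y \<in> C x \<Longrightarrow> y \<le> star x"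
  unfolding star_def by simp

section \<open>countability\<close>

fun enc :: "'a ont \<Rightarrow> 'a option list" where
  "enc Z = [None]"
| "enc (P a b c) = Some b # enc a @ enc c"

lemma enc_app: "enc x @ r = enc y @ r' \<Longrightarrow> x = y \<and> r = r'"
proof (induction x arbitrary: y r r')
  case Z
  then show ?case by (cases y) auto
next
  case (P a b c)
  note IH = P.IH
  show ?case
  proof (cases y)
    case Z
    then show ?thesis using P.prems by auto
  next
    case (P a' b' c')
    then have "b = b'" "enc a @ (enc c @ r) = enc a' @ (enc c' @ r')" using P.prems by auto
    then show ?thesis using IH(1) IH(2) P by blast
  qed
qed

lemma inj_enc: "inj enc"
  by (rule injI) (use enc_app[of _ "[]" _ "[]"] in auto)

lemma enc_lists: "C x \<subseteq> S \<Longrightarrow> enc x \<in> lists (insert None (Some ` S))"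
  by (induction x) auto

lemma countable_star:
  assumes "omega1_type TYPE('a::wellorder)"
  shows "countable {z::'a ont. star z < s}"
proof -
  have "countable {y::'a. y < s}" using assms unfolding omega1_type_def by auto
  then have "countable (lists (insert None (Some ` {y::'a. y < s})))" by auto
  moreover have "enc ` {z::'a ont. star z < s} \<subseteq> lists (insert None (Some ` {y::'a. y < s}))"
    using enc_lists C_le_star by (force intro: enc_lists)
  ultimately have "countable (enc ` {z::'a ont. star z < s})" using countable_subset by blast
  then show ?thesis using inj_enc countable_image_inj_on inj_on_subset by (metis subset_UNIV)
qed

section \<open>lub of sequences\<close>

lemma lub_seq:
  fixes f :: "nat \<Rightarrow> 'a::wellorder"
  assumes om: "omega1_type TYPE('a)" and cl: "club X"
    and inc: "\<And>n. f n < f (Suc n)" and inX: "\<And>n. f (Suc n) \<in> X"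
  shows "\<exists>l. l \<in> X \<and> (\<forall>n. f n < l) \<and> (\<forall>u. (\<forall>n. f n \<le> u) \<longrightarrow> l \<le> u)"
proof -
  obtain u0 where u0: "\<forall>y\<in>range f. y < u0" using bounded[OF om, of "range f"] by auto
  define l where "l = (LEAST u. \<forall>n. f n \<le> u)"
  have ub: "\<forall>n. f n \<le> l" unfolding l_def by (rule LeastI[of _ u0]) (use u0 in \<open>auto simp: less_imp_le\<close>)
  have least: "\<forall>u. (\<forall>n. f n \<le> u) \<longrightarrow> l \<le> u" unfolding l_def by (auto intro: Least_le)
  have lt: "\<forall>n. f n < l" using ub inc by (meson less_le_trans)
  have approx: "\<forall>y<l. \<exists>n. y < f n" using least by (meson not_le)
  have "olimit l"
    unfolding olimit_def osuccessor_def
  proof safe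
    assume "l = ozero"
    then show False using lt ozero_le[of "f 0"] by (metis not_le)
  next
    fix b assume "l = osuc b"
    then have "\<forall>n. f n \<le> b" using lt lt_osuc[OF om] by auto
    then have "l \<le> b" using least by auto
    then show False using osuc_gt[OF om, of b] \<open>l = osuc b\<close> by auto
  qed
  moreover have "\<forall>y<l. \<exists>x\<in>X. y < x \<and> x < l"
  proof (intro allI impI)
    fix y assume "y < l"
    then obtain n where "y < f n" using approx by auto
    then show "\<exists>x\<in>X. y < x \<and> x < l" using inX[of n] inc[of n] lt by (meson less_trans)
  qed
  ultimately have "l \<in> X" using cl unfolding club_def by blast
  then show ?thesis using lt least by blast
qed

lemma Theta_eq:
  assumes "nf x"
  shows "Theta X x = (LEAST t. t \<in> X \<and> star x < t \<and>
        (\<forall>z. nf z \<and> nlt z x \<and> star z < t \<longrightarrow> Theta X z < t))"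
  unfolding Theta_def
  apply (subst wfrec[OF wfRR])
  using assms by (simp add: cut_apply)

lemma Theta_ex:
  fixes x :: "'a::wellorder ont" and f :: "'a ont \<Rightarrow> 'a"
  assumes om: "omega1_type TYPE('a)" and cl: "club X"
  shows "\<exists>t. t \<in> X \<and> star x < t \<and> (\<forall>z. nf z \<and> nlt z x \<and> star z < t \<longrightarrow> f z < t)"
proof -
  define F where "F s = f ` {z. star z < s}" for s
  have cF: "countable (insert s (F s))" for s
    unfolding F_def using countable_star[OF om] by auto
  have ex: "\<exists>u. u \<in> X \<and> s < u \<and> (\<forall>v\<in>F s. v < u)" for s
  proof -
    obtain m where m: "\<forall>y\<in>insert s (F s). y < m" using bounded[OF om cF] by blast
    obtain y where "y \<in> X" "m < y" using cl unfolding club_def by blast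
    then show ?thesis using m by (meson insertCI less_trans)
  qed
  define g where "g s = (SOME u. u \<in> X \<and> s < u \<and> (\<forall>v\<in>F s. v < u))" for s
  have g: "g s \<in> X \<and> s < g s \<and> (\<forall>v\<in>F s. v < g s)" for s
    unfolding g_def using someI_ex[OF ex[of s]] .
  define sq where "sq n = (g ^^ Suc n) (star x)" for n
  have sqS: "sq (Suc n) = g (sq n)" for n unfolding sq_def by simp
  have inc: "sq n < sq (Suc n)" for n using g sqS by auto
  have inX: "sq (Suc n) \<in> X" for n using g sqS by auto
  obtain l where l: "l \<in> X" "\<forall>n. sq n < l" "\<forall>u. (\<forall>n. sq n \<le> u) \<longrightarrow> l \<le> u"
    using lub_seq[where f=sq and X=X, OF om cl inc inX] by blast
  have "star x < l" using g[of "star x"] l(2)[rule_format, of 0] unfolding sq_def by auto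
  moreover have "f z < l" if sz: "star z < l" for z
  proof -
    obtain n where "star z < sq n" using l(3) sz by (meson not_le)
    then have "f z \<in> F (sq n)" unfolding F_def by auto
    then have "f z < sq (Suc n)" using g sqS by auto
    then show ?thesis using l(2) by (meson less_trans)
  qed
  ultimately show ?thesis using l(1) by blast
qed

lemma Theta_prop:
  fixes x :: "'a::wellorder ont"
  assumes om: "omega1_type TYPE('a)" and cl: "club X" and nf: "nf x"
  shows "Theta X x \<in> X" "star x < Theta X x"
    "\<And>z. nf z \<Longrightarrow> nlt z x \<Longrightarrow> star z < Theta X x \<Longrightarrow> Theta X z < Theta X x"
    "\<And>t. t \<in> X \<Longrightarrow> star x < t \<Longrightarrow> (\<forall>z. nf z \<and> nlt z x \<and> star z < t \<longrightarrow> Theta X z < t)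
       \<Longrightarrow> Theta X x \<le> t"
proof -
  let ?Q = "\<lambda>t. t \<in> X \<and> star x < t \<and> (\<forall>z. nf z \<and> nlt z x \<and> star z < t \<longrightarrow> Theta X z < t)"
  have eq: "Theta X x = (LEAST t. ?Q t)" using Theta_eq[OF nf] .
  obtain t0 where "?Q t0" using Theta_ex[OF om cl, of x "Theta X"] by blast
  then have Q: "?Q (Theta X x)" unfolding eq by (rule LeastI)
  then show "Theta X x \<in> X" "star x < Theta X x"
    "\<And>z. nf z \<Longrightarrow> nlt z x \<Longrightarrow> star z < Theta X x \<Longrightarrow> Theta X z < Theta X x" by auto
  show "\<And>t. t \<in> X \<Longrightarrow> star x < t \<Longrightarrow> (\<forall>z. nf z \<and> nlt z x \<and> star z < t \<longrightarrow> Theta X z < t)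
       \<Longrightarrow> Theta X x \<le> t"
    unfolding eq by (rule Least_le) auto
qed



lemma omega_mult_nsuc: "\<not> omega_mult (nsuc z)"
  by (induction z) auto

lemma addc_zero[simp]: "addc \<alpha> ozero = \<alpha>"
  by (induction \<alpha>) (auto simp: mk_def)

lemma star_addc: "star (addc \<alpha> g) = max (star \<alpha>) g"
  by (induction \<alpha>) (auto simp: mk_def max_def)

lemma nf_addc: "nf \<alpha> \<Longrightarrow> omega_mult \<alpha> \<Longrightarrow> nf (addc \<alpha> g)"
proof (induction \<alpha>)
  case Z then show ?case by (simp add: mk_def)
next
  case (P a b c)
  then show ?case by (cases c) (auto simp: mk_def)
qed

lemma addc_ne_Z: "\<alpha> \<noteq> Z \<Longrightarrow> addc \<alpha> g \<noteq> Z"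
  by (cases \<alpha>) auto

lemma addc_mono: "g < g' \<Longrightarrow> nlt (addc \<alpha> g) (addc \<alpha> g')"
proof (induction \<alpha>)
  case Z
  then have "g' \<noteq> ozero" using ozero_le[of g] by auto
  then show ?case using Z by (auto simp: mk_def)
qed auto

lemma tau_addc: "olimit g \<Longrightarrow> tau (addc \<alpha> g) = TC g"
proof (induction \<alpha>)
  case Z then show ?case by (auto simp: mk_def olimit_def)
next
  case (P a b c)
  have "addc c g \<noteq> Z" using P.prems by (cases c) (auto simp: mk_def olimit_def)
  then show ?case using P by simp
qed

lemma fs_addc: "olimit g \<Longrightarrow> t \<noteq> ozero \<Longrightarrow> fs (addc \<alpha> g) t = addc \<alpha> t"
proof (induction \<alpha>)
  case Z then show ?case by (auto simp: mk_def olimit_def)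
next
  case (P a b c)
  have "addc c g \<noteq> Z" using P.prems by (cases c) (auto simp: mk_def olimit_def)
  then show ?case using P by simp
qed

lemma decomp:
  "nf \<alpha> \<Longrightarrow> omega_mult \<alpha> \<Longrightarrow> nf \<zeta> \<Longrightarrow> \<not> nlt \<zeta> \<alpha> \<Longrightarrow> nlt \<zeta> (addc \<alpha> g)
   \<Longrightarrow> \<exists>h<g. \<zeta> = addc \<alpha> h"
proof (induction \<alpha> arbitrary: \<zeta>)
  case Z
  show ?case
  proof (cases \<zeta>)
    case Z
    then have "g \<noteq> ozero" using Z.prems by (auto simp: mk_def)
    then have "ozero < g" using ozero_le[of g] by (simp add: le_less)
    then show ?thesis using Z by (intro exI[of _ ozero]) auto
  next
    case (P a' b' c')
    then show ?thesis using Z.prems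
      by (cases "g = ozero") (auto simp: mk_def nf_PZ intro!: exI[of _ b'])
  qed
next
  case (P a b c)
  note IH = P.IH(2)
  show ?case
  proof (cases \<zeta>)
    case Z then show ?thesis using P.prems by auto
  next
    case (P a' b' c')
    with \<open>\<not> nlt \<zeta> (ont.P a b c)\<close> \<open>nlt \<zeta> (addc (ont.P a b c) g)\<close>
    have "a' = a" "b' = b" "\<not> nlt c' c" "nlt c' (addc c g)"
      using nlt_tri[of a a'] less_linear[of b b'] by auto
    moreover have "nf c" "omega_mult c" "nf c'" using P \<open>nf (ont.P a b c)\<close> \<open>nf \<zeta>\<close>
      \<open>omega_mult (ont.P a b c)\<close> by auto
    ultimately obtain h where "h < g" "c' = addc c h" using IH by blast
    then show ?thesis using P \<open>a' = a\<close> \<open>b' = b\<close> by auto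
  qed
qed

context
  fixes dummy :: "'a::wellorder itself"
  assumes om: "omega1_type TYPE('a)"
begin

lemma addc_suc: "omega_mult \<alpha> \<Longrightarrow> addc \<alpha> (osuc g) = nsuc (addc \<alpha> (g::'a))"
proof (induction \<alpha>)
  case Z
  have "ozero < osuc g" by (rule le_less_trans[OF ozero_le osuc_gt[OF om]])
  then have "osuc g \<noteq> ozero" by simp
  then show ?case by (auto simp: mk_def oone_def)
qed auto

lemma addc_not_nsuc: "omega_mult \<alpha> \<Longrightarrow> olimit (g::'a) \<Longrightarrow> addc \<alpha> g \<noteq> nsuc z"
proof (induction \<alpha> arbitrary: z)
  case Z
  then show ?case
    by (cases z) (auto simp: mk_def olimit_def osuccessor_def oone_def split: if_splits)
next
  case (P a b c)
  then show ?case
    by (cases z) (auto split: if_splits)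
qed

lemma nsuc_inj: "nf z \<Longrightarrow> nf z' \<Longrightarrow> nsuc z = nsuc (z'::'a ont) \<Longrightarrow> z = z'"
proof (induction z arbitrary: z')
  case Z
  then show ?case
    by (cases z') (auto simp: oone_def nf_PZ split: if_splits dest: osuc_inj[OF om])
next
  case (P a b c)
  then show ?case
    by (cases z') (auto simp: oone_def nf_PZ split: if_splits dest: osuc_inj[OF om])
qed

lemma npred_nsuc: "nf z \<Longrightarrow> npred (nsuc z) = (z::'a ont)"
  unfolding npred_def using nsuc_inj by blast

lemma nlt_nsuc: "nf z \<Longrightarrow> nlt z (nsuc (z::'a ont))"
proof (induction z)
  case (P a b c)
  then show ?case using osuc_gt[OF om, of b] by (auto simp: nf_PZ)
qed auto

lemma nlt_nsuc_cases: "nf y \<Longrightarrow> nf z \<Longrightarrow> nlt y (nsuc (z::'a ont)) \<Longrightarrow> y = z \<or> nlt y z"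
proof (induction z arbitrary: y)
  case Z
  then show ?case
    by (cases y) (auto simp: oone_def nf_PZ dest: lt_osuc[OF om] simp: le_less)
next
  case (P a b c)
  note IH = P.IH(2)
  show ?case
  proof (cases y)
    case Z then show ?thesis by auto
  next
    case (P a' b' c')
    show ?thesis
    proof (cases "a = Z")
      case True
      then show ?thesis using P \<open>nf y\<close> \<open>nf (ont.P a b c)\<close> \<open>nlt y (nsuc (ont.P a b c))\<close>
        by (auto simp: nf_PZ dest: lt_osuc[OF om] simp: le_less)
    next
      case False
      then show ?thesis using P \<open>nf y\<close> \<open>nf (ont.P a b c)\<close> \<open>nlt y (nsuc (ont.P a b c))\<close> IH[of c']
        by auto
    qed
  qed
qed

lemma star_nsuc: "nf z \<Longrightarrow> star z \<le> star (nsuc (z::'a ont))"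
proof (induction z)
  case Z then show ?case by simp
next
  case (P a b c)
  then show ?case using osuc_gt[OF om, of b]
    by (auto simp: nf_PZ max_def)
qed

end



context
  fixes dummy :: "'a::wellorder itself"
  assumes om: "omega1_type TYPE('a)"
begin

lemma notlimit_cases:
  assumes "\<not> olimit (b::'a)" "b \<noteq> ozero"
  obtains "b = oone" | b0 where "b = osuc b0" "b0 \<noteq> ozero" "b \<noteq> oone"
proof -
  obtain b0 where b0: "b = osuc b0" using assms unfolding olimit_def osuccessor_def by auto
  show ?thesis
  proof (cases "b0 = ozero")
    case True then show ?thesis using that b0 by (simp add: oone_def)
  next
    case False
    then have "b \<noteq> oone" using b0 osuc_inj[OF om] unfolding oone_def by metis
    then show ?thesis using that b0 False by blast
  qed
qed

lemma lt_oone: "(b'::'a) < oone \<Longrightarrow> b' = ozero"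
  unfolding oone_def using lt_osuc[OF om] ozero_le by (metis antisym)

lemma fs_main:
  "nf \<alpha> \<Longrightarrow> tau \<alpha> = TOmega \<Longrightarrow>
    nf (fs \<alpha> t) \<and> nlt (fs \<alpha> t) \<alpha> \<and> t \<le> star (fs \<alpha> t) \<and>
    star (fs \<alpha> t) \<le> max (star \<alpha>) (t::'a) \<and>
    (\<forall>\<zeta>. nf \<zeta> \<longrightarrow> nlt (fs \<alpha> t) \<zeta> \<longrightarrow> nlt \<zeta> \<alpha> \<longrightarrow> t \<le> star \<zeta>)"
proof (induction \<alpha>)
  case Z
  then show ?case by simp
next
  case (P a b c)
  note IHa = P.IH(1) and IHc = P.IH(2)
  have nfa: "nf a" and b0: "b \<noteq> ozero" and nfc: "nf c" and bel: "below a c"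
    using P.prems by auto
  show ?case
  proof (cases "c = Z")
    case False
    then have tc: "tau c = TOmega" using P.prems by simp
    obtain H1: "nf (fs c t)" and H2: "nlt (fs c t) c" and H3: "t \<le> star (fs c t)"
      and H4: "star (fs c t) \<le> max (star c) t"
      and H5: "\<forall>\<zeta>. nf \<zeta> \<longrightarrow> nlt (fs c t) \<zeta> \<longrightarrow> nlt \<zeta> c \<longrightarrow> t \<le> star \<zeta>"
      using IHc[OF nfc tc] by blast
    have eq: "fs (P a b c) t = P a b (fs c t)" using False by simp
    have K: "t \<le> star \<zeta>" if "nf \<zeta>" "nlt (P a b (fs c t)) \<zeta>" "nlt \<zeta> (P a b c)" for \<zeta>
    proof (cases \<zeta>)
      case Z then show ?thesis using that by simp
    next
      case (P a' b' c')
      then have "a' = a" "b' = b" "nlt (fs c t) c'" "nlt c' c"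
        using that nlt_asym[of a a'] by auto
      moreover have "nf c'" using that P by auto
      ultimately have "t \<le> star c'" using H5 by blast
      then show ?thesis using P by (simp add: le_max_iff_disj)
    qed
    show ?thesis unfolding eq
      using nfa b0 H1 below_mono[OF H2 bel] H2 H3 H4 K
      by (auto simp: le_max_iff_disj max.coboundedI1 max.coboundedI2)
  next
    case True
    note cZ = True
    have bl: "\<not> olimit b" and aZ: "a \<noteq> Z"
      using P.prems cZ by (auto split: if_splits)
    show ?thesis
    proof (cases "nsuccessor a")
      case True
      then obtain a0 where a0: "nf a0" "a = nsuc a0" unfolding nsuccessor_def by blast
      have pa: "npred a = a0" using npred_nsuc[OF om a0(1)] a0 by simp
      have fsp: "fspow a t r = mk a0 t Z" for r using aZ True pa by (simp add: fspow_def)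
      have lt0: "nlt a0 a" using nlt_nsuc[OF om a0(1)] a0 by simp
      have st0: "star a0 \<le> star a" using star_nsuc[OF om a0(1)] a0 by simp
      have below_a: "a'' = a0 \<or> nlt a'' a0" if "nf a''" "nlt a'' a" for a''
        using nlt_nsuc_cases[OF om that(1) a0(1)] that a0 by simp
      show ?thesis
      proof (cases rule: notlimit_cases[OF bl b0])
        case 1
        have eq: "fs (P a b c) t = mk a0 t Z" using cZ 1 bl fsp by simp
        show ?thesis
        proof (cases "t = ozero")
          case True
          then show ?thesis using eq by (simp add: mk_def)
        next
          case tnz: False
          have eq2: "fs (P a b c) t = P a0 t Z" using eq tnz by (simp add: mk_def)
          have K: "t \<le> star \<zeta>" if "nf \<zeta>" "nlt (P a0 t Z) \<zeta>" "nlt \<zeta> (P a b c)" for \<zeta>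
          proof (cases \<zeta>)
            case Z then show ?thesis using that by simp
          next
            case (P a' b' c')
            have "nf a'" "b' \<noteq> ozero" using that P by auto
            then have "nlt a' a" using that P cZ 1 lt_oone by auto
            then have "a' = a0 \<or> nlt a' a0" using below_a \<open>nf a'\<close> by blast
            then have "a' = a0" "t \<le> b'" using that P nlt_asym[of a0 a'] by (auto simp: le_less)
            then show ?thesis using P by (simp add: le_max_iff_disj)
          qed
          show ?thesis unfolding eq2 using a0 tnz lt0 st0 K cZ
            by (auto simp: le_max_iff_disj)
        qed
      next
        case (2 b0)
        have eq: "fs (P a b c) t = P a b0 (mk a0 t Z)" using cZ 2 bl fsp opred_osuc[OF om] by simp
        have bb: "b0 < b" using 2 osuc_gt[OF om] by simp
        show ?thesis
        proof (cases "t = ozero")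
          case True
          then show ?thesis using eq nfa 2 bb cZ by (auto simp: mk_def le_max_iff_disj less_imp_le)
        next
          case tnz: False
          have eq2: "fs (P a b c) t = P a b0 (P a0 t Z)" using eq tnz by (simp add: mk_def)
          have K: "t \<le> star \<zeta>" if "nf \<zeta>" "nlt (P a b0 (P a0 t Z)) \<zeta>" "nlt \<zeta> (P a b c)" for \<zeta>
          proof (cases \<zeta>)
            case Z then show ?thesis using that by simp
          next
            case (P a' b' c')
            have "a' = a" "b' \<le> b0" "nlt (P a0 t Z) c'"
              using that P cZ 2 nlt_asym[of a a'] lt_osuc[OF om, of b' b0]
              by (auto simp: le_less)
            moreover have "nf c'" "below a c'" using that P \<open>a' = a\<close> by auto
            ultimately obtain a'' b'' c'' where c': "c' = P a'' b'' c''" "nf a''" "nlt a'' a"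
              by (cases c') auto
            then have "a'' = a0 \<or> nlt a'' a0" using below_a by blast
            then have "t \<le> b''" using \<open>nlt (P a0 t Z) c'\<close> c' nlt_asym[of a0 a'']
              by (auto simp: le_less)
            then show ?thesis using P c' by (simp add: le_max_iff_disj)
          qed
          show ?thesis unfolding eq2 using a0 tnz lt0 st0 K cZ nfa 2 bb
            by (auto simp: le_max_iff_disj less_imp_le)
        qed
      qed
    next
      case False
      note ns = False
      have ta: "tau a = TOmega" using P.prems cZ bl aZ ns by (auto split: if_splits)
      define r where "r = fs a t"
      obtain H1: "nf r" and H2: "nlt r a" and H3: "t \<le> star r"
        and H4: "star r \<le> max (star a) t"
        and H5: "\<forall>\<zeta>. nf \<zeta> \<longrightarrow> nlt r \<zeta> \<longrightarrow> nlt \<zeta> a \<longrightarrow> t \<le> star \<zeta>"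
        using IHa[OF nfa ta] unfolding r_def by blast
      have fsp: "fspow a t r = P r oone Z" using aZ ns by (simp add: fspow_def)
      have Ka: "t \<le> star a'" if "nf a'" "r = a' \<or> nlt r a'" "nlt a' a" for a'
        using that H3 H5 by blast
      show ?thesis
      proof (cases rule: notlimit_cases[OF bl b0])
        case 1
        have eq: "fs (P a b c) t = P r oone Z" using cZ 1 bl fsp r_def by simp
        have K: "t \<le> star \<zeta>" if "nf \<zeta>" "nlt (P r oone Z) \<zeta>" "nlt \<zeta> (P a b c)" for \<zeta>
        proof (cases \<zeta>)
          case Z then show ?thesis using that by simp
        next
          case (P a' b' c')
          have "nf a'" "b' \<noteq> ozero" using that P by auto
          then have "nlt a' a" using that P cZ 1 lt_oone by auto
          moreover have "r = a' \<or> nlt r a'" using that P by auto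
          ultimately have "t \<le> star a'" using Ka \<open>nf a'\<close> by blast
          then show ?thesis using P by (simp add: le_max_iff_disj)
        qed
        show ?thesis unfolding eq using H1 H2 H3 H4 K cZ 1
          by (auto simp: le_max_iff_disj oone_ne[OF om])
      next
        case (2 b0)
        have eq: "fs (P a b c) t = P a b0 (P r oone Z)"
          using cZ 2 bl fsp opred_osuc[OF om] r_def by simp
        have bb: "b0 < b" using 2 osuc_gt[OF om] by simp
        have K: "t \<le> star \<zeta>" if "nf \<zeta>" "nlt (P a b0 (P r oone Z)) \<zeta>" "nlt \<zeta> (P a b c)" for \<zeta>
        proof (cases \<zeta>)
          case Z then show ?thesis using that by simp
        next
          case (P a' b' c')
          have "a' = a" "b' \<le> b0" "nlt (P r oone Z) c'"
            using that P cZ 2 nlt_asym[of a a'] lt_osuc[OF om, of b' b0]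
            by (auto simp: le_less)
          moreover have "nf c'" "below a c'" using that P \<open>a' = a\<close> by auto
          ultimately obtain a'' b'' c'' where c': "c' = P a'' b'' c''" "nf a''" "nlt a'' a"
            by (cases c') auto
          moreover have "r = a'' \<or> nlt r a''" using \<open>nlt (P r oone Z) c'\<close> c' by auto
          ultimately have "t \<le> star a''" using Ka by blast
          then show ?thesis using P c' by (simp add: le_max_iff_disj)
        qed
        define m where "m = max (star (P a b c)) t"
        have m1: "star a \<le> m" "b \<le> m" "t \<le> m" unfolding m_def by (simp_all add: le_max_iff_disj)
        have "ozero < b" using 2 osuc_gt[OF om] le_less_trans[OF ozero_le] by blast
        then have "oone \<le> b" unfolding oone_def by (rule osuc_least[OF om])
        then have m2: "oone \<le> m" "b0 \<le> m" "star r \<le> m" using m1 bb H4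
          by (auto simp: le_max_iff_disj max.bounded_iff)
        have S4: "star (fs (P a b c) t) \<le> max (star (P a b c)) t"
          unfolding eq m_def[symmetric] using m1 m2 by (simp add: max.bounded_iff)
        show ?thesis unfolding eq using H1 H2 H3 S4 K cZ nfa 2 bb unfolding eq
          by (auto simp: le_max_iff_disj less_imp_le oone_ne[OF om])
      qed
    qed
  qed
qed

end



theorem lemma4p7:
  fixes X :: "'a::wellorder set" and \<alpha> :: "'a ont" and \<beta> :: 'a
    and \<theta> :: "nat \<Rightarrow> 'a"
  assumes "omega1_type TYPE('a)"
    and "club X" and "ozero \<notin> X"
    and "nf \<alpha>" and "\<alpha> \<noteq> Z" and "omega_mult \<alpha>"
    and "addc \<alpha> \<beta> \<in> epshat X \<inter> JUMP X"
    and "tau \<alpha> = TOmega"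
    and "\<theta> 0 = ThetaStar X (addc \<alpha> \<beta>)"
    and "\<And>n. \<theta> (Suc n) = Theta X (fs \<alpha> (\<theta> n))"
  shows "strict_mono \<theta> \<and> (\<forall>n. \<theta> n \<le> Theta X (addc \<alpha> \<beta>)) \<and>
         (\<forall>s. (\<forall>n. \<theta> n \<le> s) \<longrightarrow> Theta X (addc \<alpha> \<beta>) \<le> s)"
proof -
  note om = assms(1) and cl = assms(2) and nfa = assms(4) and anz = assms(5)
    and oma = assms(6) and ta = assms(8) and th0 = assms(9) and thS = assms(10)
  define x where "x = addc \<alpha> \<beta>"
  have nfx: "nf x" and jx: "x \<in> JUMP X" using assms(7) unfolding x_def epshat_def by auto
  have xnz: "x \<noteq> Z" unfolding x_def using addc_ne_Z[OF anz] .
  note TP = Theta_prop[OF om cl]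
  note FM = fs_main[OF om nfa ta]
  have bnz: "\<beta> \<noteq> ozero"
  proof
    assume "\<beta> = ozero"
    then have "x = \<alpha>" unfolding x_def by simp
    moreover have "\<not> nsuccessor \<alpha>" using oma omega_mult_nsuc unfolding nsuccessor_def by blast
    moreover have "\<alpha> \<notin> FIX X" using ta unfolding FIX_def by auto
    ultimately show False using jx anz unfolding JUMP_def by auto
  qed
  have ax: "nlt \<alpha> x" unfolding x_def using addc_mono[of ozero \<beta> \<alpha>] bnz ozero_le[of \<beta>]
    by (simp add: le_less)
  have sx: "star x = max (star \<alpha>) \<beta>" unfolding x_def by (rule star_addc)
  have key: "star \<alpha> \<le> \<theta> 0 \<and> \<beta> \<le> \<theta> 0 \<and> \<theta> 0 < Theta X x \<and>
      (\<forall>h<\<beta>. Theta X (addc \<alpha> h) \<le> \<theta> 0)"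
  proof (cases "olimit \<beta>")
    case False
    then obtain b' where b': "\<beta> = osuc b'" using bnz unfolding olimit_def osuccessor_def by auto
    define y where "y = addc \<alpha> b'"
    have nfy: "nf y" unfolding y_def using nf_addc[OF nfa oma] .
    have xy: "x = nsuc y" unfolding x_def y_def b' using addc_suc[OF om oma] .
    have "nsuccessor x" using xy nfy unfolding nsuccessor_def by blast
    then have t0: "\<theta> 0 = Theta X y" using th0 xy npred_nsuc[OF om nfy]
      unfolding ThetaStar_def x_def by simp
    have sy: "star y = max (star \<alpha>) b'" unfolding y_def by (rule star_addc)
    have bb: "b' < \<beta>" using b' osuc_gt[OF om] by simp
    have "star y < Theta X y" using TP(2)[OF nfy] .
    then have k1: "star \<alpha> \<le> \<theta> 0" "b' < \<theta> 0" using t0 sy by auto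
    then have k2: "\<beta> \<le> \<theta> 0" using b' osuc_least[OF om] by simp
    have "nlt y x" unfolding y_def x_def using addc_mono[OF bb] .
    moreover have "star y \<le> star x" using sx sy bb by (auto simp: max.bounded_iff le_max_iff_disj less_imp_le)
    then have "star y < Theta X x" using TP(2)[OF nfx] by (rule le_less_trans)
    ultimately have k3: "\<theta> 0 < Theta X x" using TP(3)[OF nfx nfy] t0 by simp
    have k4: "Theta X (addc \<alpha> h) \<le> \<theta> 0" if "h < \<beta>" for h
    proof -
      have "h \<le> b'" using that b' lt_osuc[OF om] by simp
      show ?thesis
      proof (cases "h = b'")
        case True then show ?thesis using t0 y_def by simp
      next
        case False
        then have "h < b'" using \<open>h \<le> b'\<close> by simp
        have "star (addc \<alpha> h) \<le> star y" using sy star_addc[of \<alpha> h] \<open>h < b'\<close>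
          by (auto simp: max.bounded_iff le_max_iff_disj less_imp_le)
        then have "star (addc \<alpha> h) < Theta X y" using TP(2)[OF nfy] by (rule le_less_trans)
        then show ?thesis using TP(3)[OF nfy nf_addc[OF nfa oma] _] addc_mono[OF \<open>h < b'\<close>] t0 y_def
          by (simp add: less_imp_le)
      qed
    qed
    show ?thesis using k1 k2 k3 k4 by blast
  next
    case True
    have "\<not> nsuccessor x" using addc_not_nsuc[OF om oma True] unfolding x_def nsuccessor_def by blast
    then have fx: "x \<in> FIX X" using jx xnz unfolding JUMP_def by auto
    have tx: "tau x = TC \<beta>" unfolding x_def using tau_addc[OF True] .
    have t0: "\<theta> 0 = \<beta>" using th0 \<open>\<not> nsuccessor x\<close> fx tx unfolding ThetaStar_def x_def by simp
    obtain g where g: "nf g" "nlt x g" "Theta X g = star x" "star (fs x oone) < star x"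
      "tau x = TC (star x)" using fx unfolding FIX_def by auto
    have sb: "star x = \<beta>" using g(5) tx by simp
    have "fs x oone = addc \<alpha> oone" unfolding x_def using fs_addc[OF True oone_ne[OF om]] .
    then have sa: "star \<alpha> < \<beta>" using g(4) sb star_addc[of \<alpha> oone] by simp
    have k3: "\<theta> 0 < Theta X x" using TP(2)[OF nfx] sb t0 by simp
    have k4: "Theta X (addc \<alpha> h) < \<theta> 0" if "h < \<beta>" for h
    proof -
      have "nlt (addc \<alpha> h) g" using addc_mono[OF that] g(2) nlt_trans unfolding x_def by blast
      moreover have "star (addc \<alpha> h) < Theta X g" using g(3) sb sa that star_addc[of \<alpha> h] by simp
      ultimately show ?thesis using TP(3)[OF g(1) nf_addc[OF nfa oma]] g(3) sb t0 by simp
    qed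
    show ?thesis using sa t0 k3 k4 by (auto simp: less_imp_le)
  qed
  have S1: "\<theta> n < \<theta> (Suc n)" for n
  proof -
    have "\<theta> n \<le> star (fs \<alpha> (\<theta> n))" using FM by blast
    also have "\<dots> < Theta X (fs \<alpha> (\<theta> n))" using TP(2) FM by blast
    finally show ?thesis using thS by simp
  qed
  have S2: "\<theta> n < Theta X x" for n
  proof (induction n)
    case 0 then show ?case using key by blast
  next
    case (Suc n)
    have nf1: "nf (fs \<alpha> (\<theta> n))" and lt1: "nlt (fs \<alpha> (\<theta> n)) x"
      using FM[of "\<theta> n"] ax nlt_trans by blast+
    have "star (fs \<alpha> (\<theta> n)) \<le> max (star \<alpha>) (\<theta> n)" using FM by blast
    moreover have "star \<alpha> < Theta X x" using TP(2)[OF nfx] sx by simp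
    ultimately have "star (fs \<alpha> (\<theta> n)) < Theta X x" using Suc.IH
      by (meson le_less_trans max_less_iff_conj)
    then show ?case using TP(3)[OF nfx nf1 lt1] thS by simp
  qed
  have S3: "\<theta> (Suc n) \<in> X" for n using TP(1) FM thS by metis
  obtain l where l: "l \<in> X" "\<forall>n. \<theta> n < l" "\<forall>u. (\<forall>n. \<theta> n \<le> u) \<longrightarrow> l \<le> u"
    using lub_seq[where f=\<theta> and X=X, OF om cl S1 S3] by blast
  have "Theta X x \<le> l"
  proof (rule TP(4)[OF nfx l(1)])
    have "star x \<le> \<theta> 0" using sx key by simp
    then show "star x < l" using l(2) by (meson le_less_trans)
    show "\<forall>z. nf z \<and> nlt z x \<and> star z < l \<longrightarrow> Theta X z < l"
    proof (intro allI impI, elim conjE)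
      fix z assume z: "nf z" "nlt z x" "star z < l"
      obtain n where n: "star z < \<theta> n" using l(3) z(3) by (meson not_le)
      show "Theta X z < l"
      proof (cases "nlt z \<alpha>")
        case True
        have nf1: "nf (fs \<alpha> (\<theta> n))" using FM by blast
        have T1: "Theta X (fs \<alpha> (\<theta> n)) < l" using l(2)[rule_format, of "Suc n"] thS by simp
        consider "z = fs \<alpha> (\<theta> n)" | "nlt z (fs \<alpha> (\<theta> n))" | "nlt (fs \<alpha> (\<theta> n)) z"
          using nlt_tri by blast
        then show ?thesis
        proof cases
          case 1 then show ?thesis using T1 by simp
        next
          case 2
          have "star z < Theta X (fs \<alpha> (\<theta> n))" using n S1[of n] thS by (metis less_trans)
          then show ?thesis using TP(3)[OF nf1 z(1) 2] T1 by (meson less_trans)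
        next
          case 3
          then have "\<theta> n \<le> star z" using FM z(1) True by blast
          then show ?thesis using n by simp
        qed
      next
        case False
        then obtain h where "h < \<beta>" "z = addc \<alpha> h" using decomp[OF nfa oma z(1) False] z(2)
          unfolding x_def by blast
        then show ?thesis using key l(2) by (meson le_less_trans)
      qed
    qed
  qed
  then show ?thesis
    unfolding x_def[symmetric] strict_mono_Suc_iff using S1 S2 l(3)
    by (meson less_imp_le order_trans)
qed


end
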